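(* Let $G$ be a non-elementary hyperbolic group and $M$ the maximum order of a finite subgroup of $G$. For every element $g\in G$ of infinite order, the commensurability class of $g$ contains at most $2M$ conjugacy classes of primitive elements.
   Context: Elements $g,h$ are commensurated if $k^{-1}g^mk=h^n$ for some $m,n\in\mathbb{Z}\setminus\{0\}$, $k\in G$. For $g$ of infinite order, $E^+_G(g)=\{h\mid h^{-1}g^mh=g^m\text{ for some }m\ne0\}$; $g$ is primitive if it has infinite order and $E^+_G(g)=\langle g\rangle F\cong\langle g\rangle\times F$ for some finite subgroup $F$. *)

theory Defs
  imports "HOL-Algebra.Algebra"
begin

definition word_prod :: "('a, 'b) monoid_scheme \<Rightarrow> 'a list \<Rightarrow> 'a" where
  "word_prod G ws = foldr (\<lambda>x y. x \<otimes>\<^bsub>G\<^esub> y) ws \<one>\<^bsub>G\<^esub>"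

definition finite_gen_set :: "('a, 'b) monoid_scheme \<Rightarrow> 'a set \<Rightarrow> bool" where
  "finite_gen_set G S \<longleftrightarrow> finite S \<and> S \<subseteq> carrier G \<and> generate G S = carrier G"

definition word_length :: "('a, 'b) monoid_scheme \<Rightarrow> 'a set \<Rightarrow> 'a \<Rightarrow> nat" where
  "word_length G S g = (LEAST n. \<exists>ws. length ws = n \<and>
      set ws \<subseteq> S \<union> (\<lambda>s. inv\<^bsub>G\<^esub> s) ` S \<and> word_prod G ws = g)"

definition word_dist :: "('a, 'b) monoid_scheme \<Rightarrow> 'a set \<Rightarrow> 'a \<Rightarrow> 'a \<Rightarrow> real" where
  "word_dist G S x y = real (word_length G S (inv\<^bsub>G\<^esub> x \<otimes>\<^bsub>G\<^esub> y))"

definition gromov_prod :: "('a, 'b) monoid_scheme \<Rightarrow> 'a set \<Rightarrow> 'a \<Rightarrow> 'a \<Rightarrow> 'a \<Rightarrow> real" where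
  "gromov_prod G S w x y = (word_dist G S x w + word_dist G S y w - word_dist G S x y) / 2"

definition hyperbolic_group :: "('a, 'b) monoid_scheme \<Rightarrow> bool" where
  "hyperbolic_group G \<longleftrightarrow> group G \<and> (\<exists>S \<delta>. finite_gen_set G S \<and> \<delta> \<ge> 0 \<and>
     (\<forall>x\<in>carrier G. \<forall>y\<in>carrier G. \<forall>z\<in>carrier G. \<forall>w\<in>carrier G.
        gromov_prod G S w x z \<ge> min (gromov_prod G S w x y) (gromov_prod G S w y z) - \<delta>))"

definition virtually_cyclic :: "('a, 'b) monoid_scheme \<Rightarrow> bool" where
  "virtually_cyclic G \<longleftrightarrow> (\<exists>h\<in>carrier G. finite (rcosets\<^bsub>G\<^esub> (generate G {h})))"

definition non_elementary_hyperbolic :: "('a, 'b) monoid_scheme \<Rightarrow> bool" where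
  "non_elementary_hyperbolic G \<longleftrightarrow> hyperbolic_group G \<and> \<not> virtually_cyclic G"

definition infinite_order :: "('a, 'b) monoid_scheme \<Rightarrow> 'a \<Rightarrow> bool" where
  "infinite_order G g \<longleftrightarrow> g \<in> carrier G \<and> (\<forall>n::nat. n > 0 \<longrightarrow> g [^]\<^bsub>G\<^esub> n \<noteq> \<one>\<^bsub>G\<^esub>)"

definition commensurated :: "('a, 'b) monoid_scheme \<Rightarrow> 'a \<Rightarrow> 'a \<Rightarrow> bool" where
  "commensurated G g h \<longleftrightarrow> g \<in> carrier G \<and> h \<in> carrier G \<and>
     (\<exists>(m::int) (n::int). m \<noteq> 0 \<and> n \<noteq> 0 \<and> (\<exists>k\<in>carrier G.
        inv\<^bsub>G\<^esub> k \<otimes>\<^bsub>G\<^esub> (g [^]\<^bsub>G\<^esub> m) \<otimes>\<^bsub>G\<^esub> k = h [^]\<^bsub>G\<^esub> n))"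

definition Eplus :: "('a, 'b) monoid_scheme \<Rightarrow> 'a \<Rightarrow> 'a set" where
  "Eplus G g = {h \<in> carrier G. \<exists>m::int. m \<noteq> 0 \<and>
       inv\<^bsub>G\<^esub> h \<otimes>\<^bsub>G\<^esub> (g [^]\<^bsub>G\<^esub> m) \<otimes>\<^bsub>G\<^esub> h = g [^]\<^bsub>G\<^esub> m}"

text \<open>g is primitive: E+(g) = <g>F, and multiplication <g> x F -> <g>F is an isomorphism
  (i.e. <g>F is the internal direct product of <g> and F), for some finite subgroup F.\<close>
definition primitive :: "('a, 'b) monoid_scheme \<Rightarrow> 'a \<Rightarrow> bool" where
  "primitive G g \<longleftrightarrow> infinite_order G g \<and>
     (\<exists>F. subgroup F G \<and> finite F \<and>
        Eplus G g = generate G {g} <#>\<^bsub>G\<^esub> F \<and>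
        (\<lambda>(x, y). x \<otimes>\<^bsub>G\<^esub> y) \<in> iso (G\<lparr>carrier := generate G {g}\<rparr> \<times>\<times> G\<lparr>carrier := F\<rparr>)
                                     (G\<lparr>carrier := Eplus G g\<rparr>))"

definition conj_class :: "('a, 'b) monoid_scheme \<Rightarrow> 'a \<Rightarrow> 'a set" where
  "conj_class G h = {inv\<^bsub>G\<^esub> k \<otimes>\<^bsub>G\<^esub> h \<otimes>\<^bsub>G\<^esub> k | k. k \<in> carrier G}"

end

theory Submission
  imports Defs
begin


context group begin

lemma conj_hom: "k \<in> carrier G \<Longrightarrow> (\<lambda>x. inv k \<otimes> x \<otimes> k) \<in> hom G G"
  apply (rule homI) apply simp
  apply (simp add: m_assoc) by (simp add: m_assoc[symmetric])

lemma conj_pow: "k \<in> carrier G \<Longrightarrow> x \<in> carrier G \<Longrightarrow>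
   (inv k \<otimes> x \<otimes> k) [^] (n::int) = inv k \<otimes> x [^] n \<otimes> k"
  using hom_int_pow[OF conj_hom[of k] _ is_group is_group, of x n] by simp

lemma pow_comm: "x \<in> carrier G \<Longrightarrow> inv x \<otimes> x [^] (p::int) \<otimes> x = x [^] p"
proof -
  assume x: "x \<in> carrier G"
  have "x [^] p \<otimes> x = x \<otimes> x [^] p"
    using int_pow_mult[OF x, of p 1] int_pow_mult[OF x, of 1 p] x by (simp add: add.commute)
  hence "inv x \<otimes> x [^] p \<otimes> x = inv x \<otimes> (x \<otimes> x [^] p)" using x by (simp add: m_assoc)
  thus ?thesis using x by (simp add: m_assoc[symmetric])
qed

lemma pow_int_ne_one:
  assumes "infinite_order G g" "n \<noteq> 0" shows "g [^] (n::int) \<noteq> \<one>"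
proof
  assume e: "g [^] n = \<one>"
  have g: "g \<in> carrier G" using assms unfolding infinite_order_def by auto
  show False
  proof (cases n rule: int_cases)
    case (nonneg k)
    then have "g [^] k = \<one>" using e int_pow_int[of G g k] by simp
    thus False using assms nonneg unfolding infinite_order_def by auto
  next
    case (neg k)
    then have "inv (g [^] (Suc k)) = \<one>" using e int_pow_neg_int[OF g, of "Suc k"] by simp
    then have "g [^] (Suc k) = \<one>" using g by (metis inv_one inv_inv nat_pow_closed)
    thus False using assms unfolding infinite_order_def by blast
  qed
qed

lemma finite_subgroup_torsion:
  assumes "subgroup F G" "finite F" "f \<in> F" shows "\<exists>n::nat. n > 0 \<and> f [^] n = \<one>"
proof -
  have fc: "f \<in> carrier G" using assms subgroup.subset by blast
  have "range (\<lambda>n::nat. f [^] n) \<subseteq> F"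
  proof
    fix y assume "y \<in> range (\<lambda>n::nat. f [^] n)"
    then obtain n::nat where "y = f [^] n" by auto
    then show "y \<in> F" using subgroup_int_pow_closed[OF assms(1) assms(3), of "int n"] by (simp add: int_pow_int)
  qed
  then have "finite (range (\<lambda>n::nat. f [^] n))" using assms(2) finite_subset by blast
  then have "\<not> inj (\<lambda>n::nat. f [^] n)" using finite_imageD by fastforce
  then obtain i j :: nat where ij: "i \<noteq> j" "f [^] i = f [^] j" unfolding inj_def by blast
  { fix a b :: nat assume ab: "a < b" "f [^] a = f [^] b"
    have "f [^] b = f [^] a \<otimes> f [^] (b - a)" using ab fc nat_pow_mult[OF fc, of a "b-a"] by simp
    then have "f [^] (b - a) = \<one>" using ab fc
      by (metis l_cancel_one' nat_pow_closed)
    then have "\<exists>n::nat. n > 0 \<and> f [^] n = \<one>" using ab by (intro exI[of _ "b-a"]) auto }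
  then show ?thesis using ij by (metis linorder_neqE_nat)
qed

lemma Eplus_subgroup:
  assumes g: "g \<in> carrier G" shows "subgroup (Eplus G g) G"
proof
  show "Eplus G g \<subseteq> carrier G" unfolding Eplus_def by auto
  show "\<one> \<in> Eplus G g" unfolding Eplus_def using g by (auto intro!: exI[of _ 1])
next
  fix x z assume x: "x \<in> Eplus G g" and z: "z \<in> Eplus G g"
  obtain a :: int where a: "a \<noteq> 0" "inv x \<otimes> g [^] a \<otimes> x = g [^] a" "x \<in> carrier G"
    using x unfolding Eplus_def by auto
  obtain b :: int where b: "b \<noteq> 0" "inv z \<otimes> g [^] b \<otimes> z = g [^] b" "z \<in> carrier G"
    using z unfolding Eplus_def by auto
  have 1: "inv x \<otimes> g [^] (a*b) \<otimes> x = g [^] (a*b)"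
    using conj_pow[of x "g [^] a" b] a g by (simp add: int_pow_pow)
  have 2: "inv z \<otimes> g [^] (a*b) \<otimes> z = g [^] (a*b)"
    using conj_pow[of z "g [^] b" a] b g by (simp add: int_pow_pow mult.commute)
  have "inv (x \<otimes> z) \<otimes> g [^] (a*b) \<otimes> (x \<otimes> z) = inv z \<otimes> (inv x \<otimes> g [^] (a*b) \<otimes> x) \<otimes> z"
    using a b g by (simp add: inv_mult_group m_assoc)
  also have "\<dots> = g [^] (a*b)" using 1 2 by simp
  finally have "inv (x \<otimes> z) \<otimes> g [^] (a*b) \<otimes> (x \<otimes> z) = g [^] (a*b)" .
  moreover have "a * b \<noteq> 0" using a b by simp
  ultimately show "x \<otimes> z \<in> Eplus G g" unfolding Eplus_def using a b by blast
next
  fix x assume x: "x \<in> Eplus G g"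
  obtain a :: int where a: "a \<noteq> 0" "inv x \<otimes> g [^] a \<otimes> x = g [^] a" "x \<in> carrier G"
    using x unfolding Eplus_def by auto
  have "x \<otimes> (inv x \<otimes> g [^] a \<otimes> x) \<otimes> inv x = g [^] a" using g a(3)
    by (simp add: m_assoc[symmetric]) (simp add: m_assoc)
  then have "inv (inv x) \<otimes> g [^] a \<otimes> inv x = g [^] a" using a(2) a(3) by simp
  then show "inv x \<in> Eplus G g" unfolding Eplus_def using a by auto
qed

end



context group begin

lemma prim_struct:
  assumes prim: "primitive G h0"
  shows "\<exists>F0 \<phi>. subgroup F0 G \<and> finite F0 \<and>
     \<phi> \<in> hom (G\<lparr>carrier := Eplus G h0\<rparr>) integer_group \<and> \<phi> h0 = 1 \<and>
     (\<forall>x\<in>Eplus G h0. \<exists>f\<in>F0. x = h0 [^] (\<phi> x) \<otimes> f)"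
proof -
  have io: "infinite_order G h0" using prim unfolding primitive_def by auto
  have h0: "h0 \<in> carrier G" using io unfolding infinite_order_def by auto
  obtain F0 where F0: "subgroup F0 G" "finite F0"
    and E: "Eplus G h0 = generate G {h0} <#> F0"
    and iso: "(\<lambda>(x, y). x \<otimes> y) \<in> iso (G\<lparr>carrier := generate G {h0}\<rparr> \<times>\<times> G\<lparr>carrier := F0\<rparr>)
                                     (G\<lparr>carrier := Eplus G h0\<rparr>)"
    using prim unfolding primitive_def by blast
  have F0c: "F0 \<subseteq> carrier G" using F0 subgroup.subset by blast
  have gen: "generate G {h0} = {h0 [^] (k::int) | k. k \<in> UNIV}" using generate_pow[OF h0] .
  have dec: "\<exists>i f. f \<in> F0 \<and> x = h0 [^] (i::int) \<otimes> f" if "x \<in> Eplus G h0" for x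
    using that unfolding E set_mult_def gen by blast
  have inj: "inj_on (\<lambda>(x, y). x \<otimes> y) (generate G {h0} \<times> F0)"
    using iso unfolding iso_def bij_betw_def by simp
  have homp: "(\<lambda>(x, y). x \<otimes> y) \<in> hom (G\<lparr>carrier := generate G {h0}\<rparr> \<times>\<times> G\<lparr>carrier := F0\<rparr>)
                                     (G\<lparr>carrier := Eplus G h0\<rparr>)"
    using iso by (rule iso_imp_homomorphism)
  have uniq: "i = j" if "f \<in> F0" "f' \<in> F0" "h0 [^] (i::int) \<otimes> f = h0 [^] (j::int) \<otimes> f'" for i j f f'
  proof -
    have "h0 [^] i \<in> generate G {h0}" "h0 [^] j \<in> generate G {h0}" unfolding gen by blast+
    then have "(h0 [^] i, f) = (h0 [^] j, f')"
      using inj_onD[OF inj, of "(h0 [^] i, f)" "(h0 [^] j, f')"] that by simp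
    then have "h0 [^] i = h0 [^] j" by simp
    then have "h0 [^] (i - j) = \<one>" using h0 by (simp add: int_pow_diff)
    then show ?thesis using pow_int_ne_one[OF io, of "i - j"] by auto
  qed
  define \<phi> where "\<phi> x = (THE i::int. \<exists>f\<in>F0. x = h0 [^] i \<otimes> f)" for x
  have phi_eq: "\<phi> (h0 [^] i \<otimes> f) = i" if "f \<in> F0" for i :: int and f
    unfolding \<phi>_def
  proof (rule the_equality)
    show "\<exists>fa\<in>F0. h0 [^] i \<otimes> f = h0 [^] i \<otimes> fa" using that by blast
    fix j :: int assume "\<exists>fa\<in>F0. h0 [^] i \<otimes> f = h0 [^] j \<otimes> fa"
    then obtain fa where "fa \<in> F0" "h0 [^] i \<otimes> f = h0 [^] j \<otimes> fa" by blast
    then show "j = i" using uniq[of f fa i j] that by simp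
  qed
  have repr: "\<forall>x\<in>Eplus G h0. \<exists>f\<in>F0. x = h0 [^] (\<phi> x) \<otimes> f"
  proof
    fix x assume "x \<in> Eplus G h0"
    then obtain i f where "f \<in> F0" "x = h0 [^] (i::int) \<otimes> f" using dec by blast
    then show "\<exists>f\<in>F0. x = h0 [^] (\<phi> x) \<otimes> f" using phi_eq by auto
  qed
  have phi1: "\<phi> h0 = 1"
    using phi_eq[of "\<one>" 1] h0 subgroup.one_closed[OF F0(1)] by simp
  have hom: "\<phi> \<in> hom (G\<lparr>carrier := Eplus G h0\<rparr>) integer_group"
  proof (rule homI)
    fix x z assume x: "x \<in> carrier (G\<lparr>carrier := Eplus G h0\<rparr>)" and z: "z \<in> carrier (G\<lparr>carrier := Eplus G h0\<rparr>)"
    obtain i f where f: "f \<in> F0" "x = h0 [^] (i::int) \<otimes> f" using dec[of x] x by simp blast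
    obtain j f' where f': "f' \<in> F0" "z = h0 [^] (j::int) \<otimes> f'" using dec[of z] z by simp blast
    have m: "(\<lambda>(x, y). x \<otimes> y) ((h0 [^] i, f) \<otimes>\<^bsub>G\<lparr>carrier := generate G {h0}\<rparr> \<times>\<times> G\<lparr>carrier := F0\<rparr>\<^esub> (h0 [^] j, f'))
        = (\<lambda>(x, y). x \<otimes> y) (h0 [^] i, f) \<otimes>\<^bsub>G\<lparr>carrier := Eplus G h0\<rparr>\<^esub> (\<lambda>(x, y). x \<otimes> y) (h0 [^] j, f')"
    proof (rule hom_mult[OF homp])
      have "h0 [^] i \<in> generate G {h0}" "h0 [^] j \<in> generate G {h0}" unfolding gen by blast+
      then show "(h0 [^] i, f) \<in> carrier (G\<lparr>carrier := generate G {h0}\<rparr> \<times>\<times> G\<lparr>carrier := F0\<rparr>)"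
        "(h0 [^] j, f') \<in> carrier (G\<lparr>carrier := generate G {h0}\<rparr> \<times>\<times> G\<lparr>carrier := F0\<rparr>)"
        using f f' by simp_all
    qed
    then have "x \<otimes> z = (h0 [^] i \<otimes> h0 [^] j) \<otimes> (f \<otimes> f')" using f f' by simp
    then have "x \<otimes> z = h0 [^] (i + j) \<otimes> (f \<otimes> f')" using h0 by (simp add: int_pow_mult)
    moreover have ff: "f \<otimes> f' \<in> F0" by (rule subgroup.m_closed[OF F0(1) f(1) f'(1)])
    ultimately have 1: "\<phi> (x \<otimes> z) = i + j" using phi_eq[OF ff, of "i+j"] by simp
    have 2: "\<phi> x = i" using phi_eq[OF f(1), of i] f(2) by simp
    have 3: "\<phi> z = j" using phi_eq[OF f'(1), of j] f'(2) by simp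
    show "\<phi> (x \<otimes>\<^bsub>G\<lparr>carrier := Eplus G h0\<rparr>\<^esub> z) = \<phi> x \<otimes>\<^bsub>integer_group\<^esub> \<phi> z"
      using 1 2 3 by simp
  qed simp
  show ?thesis using F0 hom phi1 repr by blast
qed

end



context group begin

lemma word_prod_closed: "set ws \<subseteq> carrier G \<Longrightarrow> word_prod G ws \<in> carrier G"
  by (induction ws) (auto simp: word_prod_def)

lemma word_prod_append: "set xs \<subseteq> carrier G \<Longrightarrow> set ys \<subseteq> carrier G \<Longrightarrow>
   word_prod G (xs @ ys) = word_prod G xs \<otimes> word_prod G ys"
proof (induction xs)
  case Nil then show ?case using word_prod_closed[of ys] by (simp add: word_prod_def)
next
  case (Cons a xs)
  then show ?case using word_prod_closed[of ys] word_prod_closed[of xs]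
    by (simp add: word_prod_def m_assoc)
qed

lemma word_prod_rev_inv: "set ws \<subseteq> carrier G \<Longrightarrow>
   word_prod G (rev (map (\<lambda>z. inv z) ws)) = inv (word_prod G ws)"
proof (induction ws)
  case Nil then show ?case by (simp add: word_prod_def)
next
  case (Cons a ws)
  have c: "set (rev (map (\<lambda>z. inv z) ws)) \<subseteq> carrier G" using Cons by auto
  have "word_prod G (rev (map (\<lambda>z. inv z) (a # ws))) = word_prod G (rev (map (\<lambda>z. inv z) ws)) \<otimes> word_prod G [inv a]"
    using word_prod_append[OF c, of "[inv a]"] Cons by simp
  also have "\<dots> = inv (word_prod G ws) \<otimes> inv a" using Cons by (simp add: word_prod_def)
  also have "\<dots> = inv (a \<otimes> word_prod G ws)" using Cons word_prod_closed[of ws]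
    by (simp add: inv_mult_group)
  finally show ?case by (simp add: word_prod_def)
qed

lemma gen_word:
  assumes S: "S \<subseteq> carrier G" and x: "x \<in> generate G S"
  shows "\<exists>ws. set ws \<subseteq> S \<union> (\<lambda>s. inv s) ` S \<and> word_prod G ws = x"
  using x
proof (induction rule: generate.induct)
  case one then show ?case by (intro exI[of _ "[]"]) (simp add: word_prod_def)
next
  case (incl h) then show ?case using S by (intro exI[of _ "[h]"]) (auto simp: word_prod_def)
next
  case (inv h) then show ?case using S by (intro exI[of _ "[inv h]"]) (auto simp: word_prod_def)
next
  case (eng h1 h2)
  then obtain w1 w2 where w: "set w1 \<subseteq> S \<union> (\<lambda>s. inv s) ` S" "word_prod G w1 = h1"
    "set w2 \<subseteq> S \<union> (\<lambda>s. inv s) ` S" "word_prod G w2 = h2" by blast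
  have A: "S \<union> (\<lambda>s. inv s) ` S \<subseteq> carrier G" using S by auto
  show ?case using w A word_prod_append[of w1 w2]
    by (intro exI[of _ "w1 @ w2"]) auto
qed

end

locale fg_group = group G for G (structure) + fixes S assumes fg: "finite_gen_set G S"
begin

abbreviation "A \<equiv> S \<union> (\<lambda>s. inv s) ` S"
abbreviation "wl \<equiv> word_length G S"

lemma S_carr: "S \<subseteq> carrier G" using fg unfolding finite_gen_set_def by auto
lemma A_carr: "A \<subseteq> carrier G" using S_carr by auto

lemma has_word: "x \<in> carrier G \<Longrightarrow> \<exists>ws. set ws \<subseteq> A \<and> word_prod G ws = x"
  using gen_word[OF S_carr, of x] fg unfolding finite_gen_set_def by auto

lemma wl_word: "x \<in> carrier G \<Longrightarrow> \<exists>ws. length ws = wl x \<and> set ws \<subseteq> A \<and> word_prod G ws = x"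
proof -
  assume x: "x \<in> carrier G"
  obtain ws where "set ws \<subseteq> A" "word_prod G ws = x" using has_word[OF x] by blast
  then have ex: "\<exists>n ws. length ws = n \<and> set ws \<subseteq> A \<and> word_prod G ws = x" by blast
  show ?thesis unfolding word_length_def by (rule LeastI_ex[OF ex])
qed

lemma wl_le: "set ws \<subseteq> A \<Longrightarrow> word_prod G ws = x \<Longrightarrow> wl x \<le> length ws"
  unfolding word_length_def by (rule Least_le) blast

lemma wl_mult: "x \<in> carrier G \<Longrightarrow> y \<in> carrier G \<Longrightarrow> wl (x \<otimes> y) \<le> wl x + wl y"
proof -
  assume x: "x \<in> carrier G" and y: "y \<in> carrier G"
  obtain w1 where w1: "length w1 = wl x" "set w1 \<subseteq> A" "word_prod G w1 = x" using wl_word[OF x] by blast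
  obtain w2 where w2: "length w2 = wl y" "set w2 \<subseteq> A" "word_prod G w2 = y" using wl_word[OF y] by blast
  have "word_prod G (w1 @ w2) = x \<otimes> y" using word_prod_append[of w1 w2] w1 w2 A_carr by auto
  then have "wl (x \<otimes> y) \<le> length (w1 @ w2)" using wl_le[of "w1 @ w2"] w1 w2 by auto
  then show ?thesis using w1 w2 by simp
qed

lemma wl_inv_le: "x \<in> carrier G \<Longrightarrow> wl (inv x) \<le> wl x"
proof -
  assume x: "x \<in> carrier G"
  obtain w where w: "length w = wl x" "set w \<subseteq> A" "word_prod G w = x" using wl_word[OF x] by blast
  have "set (rev (map (\<lambda>z. inv z) w)) \<subseteq> A"
  proof
    fix c assume "c \<in> set (rev (map (\<lambda>z. inv z) w))"
    then obtain b where b: "b \<in> set w" "c = inv b" by auto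
    then have "b \<in> S \<or> (\<exists>s\<in>S. b = inv s)" using w by auto
    then show "c \<in> A" using b S_carr by auto
  qed
  moreover have "word_prod G (rev (map (\<lambda>z. inv z) w)) = inv x" using word_prod_rev_inv[of w] w A_carr by auto
  ultimately have "wl (inv x) \<le> length (rev (map (\<lambda>z. inv z) w))" using wl_le by blast
  then show ?thesis using w by simp
qed

lemma wl_inv: "x \<in> carrier G \<Longrightarrow> wl (inv x) = wl x"
  using wl_inv_le[of x] wl_inv_le[of "inv x"] by simp

definition d where "d x y = wl (inv x \<otimes> y)"

lemma d_sym: "x \<in> carrier G \<Longrightarrow> y \<in> carrier G \<Longrightarrow> d x y = d y x"
  unfolding d_def using wl_inv[of "inv x \<otimes> y"] by (simp add: inv_mult_group)

lemma d_tri: "x \<in> carrier G \<Longrightarrow> y \<in> carrier G \<Longrightarrow> z \<in> carrier G \<Longrightarrow> d x z \<le> d x y + d y z"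
proof -
  assume c: "x \<in> carrier G" "y \<in> carrier G" "z \<in> carrier G"
  have "y \<otimes> (inv y \<otimes> z) = z" using c by (simp add: m_assoc[symmetric])
  then have "inv x \<otimes> z = (inv x \<otimes> y) \<otimes> (inv y \<otimes> z)" using c by (simp add: m_assoc)
  then show ?thesis unfolding d_def using wl_mult[of "inv x \<otimes> y" "inv y \<otimes> z"] c by simp
qed

lemma midpoint:
  assumes x: "x \<in> carrier G" and y: "y \<in> carrier G" and a: "a \<le> d x y"
  shows "\<exists>m\<in>carrier G. d x m \<le> a \<and> d m y \<le> d x y - a"
proof -
  have c: "inv x \<otimes> y \<in> carrier G" using x y by simp
  obtain w where w: "length w = d x y" "set w \<subseteq> A" "word_prod G w = inv x \<otimes> y"
    using wl_word[OF c] unfolding d_def by blast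
  have st: "set (take a w) \<subseteq> A" "set (drop a w) \<subseteq> A" using w(2) set_take_subset set_drop_subset by fastforce+
  then have stc: "set (take a w) \<subseteq> carrier G" "set (drop a w) \<subseteq> carrier G" using A_carr by auto
  define m where "m = x \<otimes> word_prod G (take a w)"
  have pc: "word_prod G (take a w) \<in> carrier G" "word_prod G (drop a w) \<in> carrier G"
    using word_prod_closed stc by auto
  have mc: "m \<in> carrier G" unfolding m_def using x pc by simp
  have 1: "inv x \<otimes> m = word_prod G (take a w)" unfolding m_def using x pc by (simp add: m_assoc[symmetric])
  have eq: "inv x \<otimes> y = word_prod G (take a w) \<otimes> word_prod G (drop a w)"
    using w(3) word_prod_append[OF stc] by simp
  have "m \<otimes> word_prod G (drop a w) = x \<otimes> (word_prod G (take a w) \<otimes> word_prod G (drop a w))"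
    unfolding m_def using x pc by (simp add: m_assoc)
  also have "\<dots> = x \<otimes> (inv x \<otimes> y)" using eq by simp
  also have "\<dots> = y" using x y by (simp add: m_assoc[symmetric])
  finally have yy: "y = m \<otimes> word_prod G (drop a w)" by simp
  have 2: "inv m \<otimes> y = word_prod G (drop a w)" unfolding yy using mc pc by (simp add: m_assoc[symmetric])
  have "d x m \<le> a" unfolding d_def 1 using wl_le[OF st(1)] w(1) a by fastforce
  moreover have "d m y \<le> d x y - a" unfolding d_def 2 using wl_le[OF st(2)] w(1) unfolding d_def by fastforce
  ultimately show ?thesis using mc by blast
qed

lemma ball_finite: "finite {z \<in> carrier G. wl z \<le> R}"
proof -
  have fA: "finite A" using fg unfolding finite_gen_set_def by auto
  have "{z \<in> carrier G. wl z \<le> R} \<subseteq> word_prod G ` {ws. set ws \<subseteq> A \<and> length ws \<le> R}"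
  proof
    fix z assume "z \<in> {z \<in> carrier G. wl z \<le> R}"
    then obtain ws where "length ws = wl z" "set ws \<subseteq> A" "word_prod G ws = z" "wl z \<le> R"
      using wl_word by blast
    then show "z \<in> word_prod G ` {ws. set ws \<subseteq> A \<and> length ws \<le> R}" by force
  qed
  moreover have "finite {ws. set ws \<subseteq> A \<and> length ws \<le> R}" using finite_lists_length_le[OF fA] .
  ultimately show ?thesis using finite_subset by blast
qed

end



context fg_group begin

lemma gp_d: "gromov_prod G S w x y = (real (d x w) + real (d y w) - real (d x y)) / 2"
  unfolding gromov_prod_def word_dist_def d_def by simp

lemma finite_subgroup_bound:
  assumes hyp: "\<forall>x\<in>carrier G. \<forall>y\<in>carrier G. \<forall>z\<in>carrier G. \<forall>w\<in>carrier G.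
        gromov_prod G S w x z \<ge> min (gromov_prod G S w x y) (gromov_prod G S w y z) - \<delta>"
    and H: "subgroup H G" "finite H"
  shows "card H \<le> card {z \<in> carrier G. wl z \<le> nat \<lfloor>4*\<delta>+1\<rfloor>}"
proof -
  have Hc: "H \<subseteq> carrier G" using H subgroup.subset by blast
  have one: "\<one> \<in> H" using H subgroup.one_closed by blast
  have ex: "\<exists>n x. x \<in> carrier G \<and> (\<forall>h\<in>H. d x h \<le> n)"
    using member_le_sum[of _ H "\<lambda>h. d \<one> h"] H(2) by (intro exI[of _ "\<Sum>h\<in>H. d \<one> h"] exI[of _ \<one>]) auto
  define r where "r = (LEAST n. \<exists>x. x \<in> carrier G \<and> (\<forall>h\<in>H. d x h \<le> n))"
  obtain x0 where x0: "x0 \<in> carrier G" "\<forall>h\<in>H. d x0 h \<le> r"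
    using LeastI_ex[OF ex] unfolding r_def by blast
  have rmin: "r \<le> n" if "x \<in> carrier G" "\<forall>h\<in>H. d x h \<le> n" for x n
    unfolding r_def using that by (intro Least_le) blast
  have key: "d x0 (h1 \<otimes> x0) \<le> nat \<lfloor>4*\<delta>+1\<rfloor>" if h1: "h1 \<in> H" for h1
  proof -
    define y where "y = h1 \<otimes> x0"
    have h1c: "h1 \<in> carrier G" using h1 Hc by auto
    have yc: "y \<in> carrier G" unfolding y_def using h1c x0 by simp
    have ry: "d y h \<le> r" if h: "h \<in> H" for h
    proof -
      have hc: "h \<in> carrier G" using h Hc by auto
      have "inv y \<otimes> h = inv x0 \<otimes> (inv h1 \<otimes> h)" unfolding y_def using h1c x0 hc
        by (simp add: inv_mult_group m_assoc)
      moreover have "inv h1 \<otimes> h \<in> H" using H(1) h1 h subgroup.m_closed subgroup.m_inv_closed by metis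
      ultimately show ?thesis using x0 unfolding d_def by auto
    qed
    define D where "D = d x0 y"
    define a where "a = D div 2"
    have aD: "a \<le> D" "a \<le> D - a" "D \<le> 2 * a + 1" unfolding a_def by auto
    obtain m where m: "m \<in> carrier G" "d x0 m \<le> a" "d m y \<le> D - a"
      using midpoint[OF x0(1) yc, of a] aD unfolding D_def by blast
    have tri: "D \<le> d x0 m + d m y" unfolding D_def using d_tri x0 m yc by blast
    have bound: "real (d m h) \<le> real r - real a + 2 * \<delta>" if h: "h \<in> H" for h
    proof -
      have hc: "h \<in> carrier G" using h Hc by auto
      have fp: "gromov_prod G S m x0 y \<ge> min (gromov_prod G S m x0 h) (gromov_prod G S m h y) - \<delta>"
        using hyp x0 hc yc m by blast
      have s1: "d y m = d m y" "d h m = d m h" "d m x0 = d x0 m" "d h y = d y h"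
        using d_sym x0 m yc hc by auto
      have r1: "real (d x0 h) \<le> real r" "real (d y h) \<le> real r" "real (d x0 m) \<le> real a"
        using x0 h ry m(2) by auto
      have dd: "real (D - a) = real D - real a" using aD by simp
      have t: "real D \<le> real (d x0 m) + real (d m y)" using tri by simp
      have t2: "real (d m y) \<le> real D - real a" using m(3) dd by linarith
      have t3: "real a \<le> real D - real a" using aD dd by linarith
      have "(real (d x0 m) + real (d m h) - real (d x0 h)) / 2 - \<delta> \<le> (real (d x0 m) + real (d m y) - real D) / 2 \<or>
            (real (d m h) + real (d m y) - real (d y h)) / 2 - \<delta> \<le> (real (d x0 m) + real (d m y) - real D) / 2"
        using fp unfolding gp_d s1 D_def[symmetric] by linarith
      then show ?thesis
      proof
        assume "(real (d x0 m) + real (d m h) - real (d x0 h)) / 2 - \<delta> \<le> (real (d x0 m) + real (d m y) - real D) / 2"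
        then show ?thesis using t t2 t3 r1 by argo
      next
        assume "(real (d m h) + real (d m y) - real (d y h)) / 2 - \<delta> \<le> (real (d x0 m) + real (d m y) - real D) / 2"
        then show ?thesis using t t2 t3 r1 by argo
      qed
    qed
    define XX where "XX = real r - real a + 2 * \<delta>"
    have XX0: "0 \<le> XX" using bound[OF one] unfolding XX_def by simp
    have "\<forall>h\<in>H. d m h \<le> nat \<lfloor>XX\<rfloor>"
    proof
      fix h assume "h \<in> H"
      then have "real (d m h) \<le> XX" using bound unfolding XX_def by blast
      then have "int (d m h) \<le> \<lfloor>XX\<rfloor>" by (simp add: le_floor_iff)
      then show "d m h \<le> nat \<lfloor>XX\<rfloor>" by simp
    qed
    then have "r \<le> nat \<lfloor>XX\<rfloor>" using rmin m(1) by blast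
    then have "real r \<le> XX" using XX0 by linarith
    then have "real a \<le> 2 * \<delta>" unfolding XX_def by simp
    then have "real D \<le> 4 * \<delta> + 1" using aD(3) by linarith
    then have "of_int (int D) \<le> 4*\<delta>+1" by simp
    then have "int D \<le> \<lfloor>4*\<delta>+1\<rfloor>" by (rule le_floor_iff[THEN iffD2])
    then show ?thesis unfolding D_def y_def by simp
  qed
  define f where "f h = inv x0 \<otimes> (h \<otimes> x0)" for h
  have inj: "inj_on f H"
  proof
    fix u v assume "u \<in> H" "v \<in> H" "f u = f v"
    then have uv: "u \<in> carrier G" "v \<in> carrier G" "inv x0 \<otimes> (u \<otimes> x0) = inv x0 \<otimes> (v \<otimes> x0)"
      unfolding f_def using Hc by auto
    then show "u = v" using x0(1) by simp
  qed
  have "f ` H \<subseteq> {z \<in> carrier G. wl z \<le> nat \<lfloor>4*\<delta>+1\<rfloor>}"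
    using key Hc x0 unfolding f_def d_def by auto
  then show ?thesis using card_inj_on_le[OF inj _ ball_finite] by blast
qed

end



context group begin

lemma cancel1: "k \<in> carrier G \<Longrightarrow> x \<in> carrier G \<Longrightarrow> inv k \<otimes> (k \<otimes> x) = x"
  by (simp add: m_assoc[symmetric])
lemma cancel2: "k \<in> carrier G \<Longrightarrow> x \<in> carrier G \<Longrightarrow> k \<otimes> (inv k \<otimes> x) = x"
  by (simp add: m_assoc[symmetric])

lemma conj_solve: "k \<in> carrier G \<Longrightarrow> x \<in> carrier G \<Longrightarrow> inv k \<otimes> x \<otimes> k = y \<Longrightarrow> x = k \<otimes> y \<otimes> inv k"
proof -
  assume c: "k \<in> carrier G" "x \<in> carrier G" and e: "inv k \<otimes> x \<otimes> k = y"
  have "k \<otimes> y \<otimes> inv k = k \<otimes> (inv k \<otimes> (x \<otimes> (k \<otimes> inv k)))" unfolding e[symmetric] using c by (simp add: m_assoc)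
  also have "\<dots> = x" using c by (simp add: cancel2)
  finally show ?thesis by simp
qed

lemma conj_class_conj:
  assumes k: "k \<in> carrier G" and h: "h \<in> carrier G"
  shows "conj_class G (k \<otimes> h \<otimes> inv k) = conj_class G h"
proof
  show "conj_class G (k \<otimes> h \<otimes> inv k) \<subseteq> conj_class G h"
  proof
    fix z assume "z \<in> conj_class G (k \<otimes> h \<otimes> inv k)"
    then obtain c where c: "c \<in> carrier G" "z = inv c \<otimes> (k \<otimes> h \<otimes> inv k) \<otimes> c" unfolding conj_class_def by blast
    have "z = inv (inv k \<otimes> c) \<otimes> h \<otimes> (inv k \<otimes> c)" using c k h by (simp add: inv_mult_group m_assoc)
    then show "z \<in> conj_class G h" unfolding conj_class_def using c k by blast
  qed
  show "conj_class G h \<subseteq> conj_class G (k \<otimes> h \<otimes> inv k)"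
  proof
    fix z assume "z \<in> conj_class G h"
    then obtain c where c: "c \<in> carrier G" "z = inv c \<otimes> h \<otimes> c" unfolding conj_class_def by blast
    have "z = inv (k \<otimes> c) \<otimes> (k \<otimes> h \<otimes> inv k) \<otimes> (k \<otimes> c)" using c k h
      by (simp add: inv_mult_group m_assoc cancel1)
    then show "z \<in> conj_class G (k \<otimes> h \<otimes> inv k)" unfolding conj_class_def using c k by blast
  qed
qed

lemma claim:
  assumes c0: "commensurated G g h0" and io0: "infinite_order G h0"
    and prim: "primitive G h" and c: "commensurated G g h"
    and F0: "subgroup F0 G"
    and hom: "\<phi> \<in> hom (G\<lparr>carrier := Eplus G h0\<rparr>) integer_group" and phi1: "\<phi> h0 = 1"
    and repr: "\<forall>x\<in>Eplus G h0. \<exists>f\<in>F0. x = h0 [^] (\<phi> x) \<otimes> f"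
  shows "\<exists>k\<in>carrier G. \<exists>f\<in>F0. k \<otimes> h \<otimes> inv k = h0 \<otimes> f \<or> k \<otimes> h \<otimes> inv k = inv h0 \<otimes> f"
proof -
  have h0: "h0 \<in> carrier G" using io0 unfolding infinite_order_def by auto
  obtain m1 n1 :: int and k1 where mn1: "m1 \<noteq> 0" "n1 \<noteq> 0" "k1 \<in> carrier G"
    "inv k1 \<otimes> g [^] m1 \<otimes> k1 = h0 [^] n1" and g: "g \<in> carrier G"
    using c0 unfolding commensurated_def by blast
  obtain m2 n2 :: int and k2 where mn2: "m2 \<noteq> 0" "n2 \<noteq> 0" "k2 \<in> carrier G"
    "inv k2 \<otimes> g [^] m2 \<otimes> k2 = h [^] n2" and h: "h \<in> carrier G"
    using c unfolding commensurated_def by blast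
  define q where "q = n1 * m2"
  define p where "p = n2 * m1"
  have pq: "p \<noteq> 0" "q \<noteq> 0" unfolding p_def q_def using mn1 mn2 by auto
  have e1: "inv k1 \<otimes> g [^] (m1 * m2) \<otimes> k1 = h0 [^] q"
    using conj_pow[OF mn1(3), of "g [^] m1" m2] mn1(4) g h0 unfolding q_def by (simp add: int_pow_pow)
  have e2: "inv k2 \<otimes> g [^] (m1 * m2) \<otimes> k2 = h [^] p"
    using conj_pow[OF mn2(3), of "g [^] m2" m1] mn2(4) g h unfolding p_def by (simp add: int_pow_pow mult.commute)
  have e1': "g [^] (m1 * m2) = k1 \<otimes> h0 [^] q \<otimes> inv k1" using conj_solve[OF mn1(3) _ e1] g by simp
  define k where "k = inv k1 \<otimes> k2"
  have kc: "k \<in> carrier G" unfolding k_def using mn1 mn2 by simp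
  have ek: "inv k \<otimes> h0 [^] q \<otimes> k = h [^] p"
  proof -
    have "inv k \<otimes> h0 [^] q \<otimes> k = inv k2 \<otimes> (k1 \<otimes> h0 [^] q \<otimes> inv k1) \<otimes> k2"
      unfolding k_def using mn1 mn2 h0 by (simp add: inv_mult_group m_assoc)
    also have "\<dots> = h [^] p" using e1' e2 by simp
    finally show ?thesis .
  qed
  define h' where "h' = k \<otimes> h \<otimes> inv k"
  have h'c: "h' \<in> carrier G" unfolding h'_def using kc h by simp
  have h'pow: "h' [^] (i::int) = k \<otimes> h [^] i \<otimes> inv k" for i
    using conj_pow[of "inv k" h i] kc h unfolding h'_def by simp
  have h'p: "h' [^] p = h0 [^] q" using h'pow[of p] conj_solve[OF kc _ ek] h0 by simp
  define y where "y = inv k \<otimes> h0 \<otimes> k"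
  have yc: "y \<in> carrier G" unfolding y_def using kc h0 by simp
  have yq: "y [^] q = h [^] p" unfolding y_def using conj_pow[OF kc h0, of q] ek by simp
  have yE: "y \<in> Eplus G h" unfolding Eplus_def using yc pq pow_comm[OF yc, of q] yq by auto
  obtain F where F: "subgroup F G" "finite F" "Eplus G h = generate G {h} <#> F"
    using prim unfolding primitive_def by blast
  obtain j :: int and f where jf: "f \<in> F" "y = h [^] j \<otimes> f"
    using yE unfolding F(3) set_mult_def generate_pow[OF h] by blast
  have fc: "f \<in> carrier G" using jf F(1) subgroup.subset by blast
  define t where "t = k \<otimes> f \<otimes> inv k"
  have tc: "t \<in> carrier G" unfolding t_def using kc fc by simp
  have h0eq: "h0 = h' [^] j \<otimes> t"
  proof -
    have "h0 = k \<otimes> y \<otimes> inv k" using conj_solve[OF kc h0] y_def by simp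
    also have "\<dots> = (k \<otimes> h [^] j \<otimes> inv k) \<otimes> (k \<otimes> f \<otimes> inv k)"
      using jf kc fc h by (simp add: m_assoc cancel1)
    finally show ?thesis unfolding t_def h'pow by simp
  qed
  have E0: "subgroup (Eplus G h0) G" by (rule Eplus_subgroup[OF h0])
  have h'E: "h' \<in> Eplus G h0" unfolding Eplus_def using h'c pq pow_comm[OF h'c, of p] h'p by auto
  have h0E: "h0 \<in> Eplus G h0" unfolding Eplus_def using h0 pow_comm[OF h0, of 1] by (auto intro!: exI[of _ 1])
  have h'jE: "h' [^] j \<in> Eplus G h0" using subgroup_int_pow_closed[OF E0 h'E] .
  have teq: "t = inv (h' [^] j) \<otimes> h0" using h0eq h'c tc by (simp add: cancel1)
  have tE: "t \<in> Eplus G h0" unfolding teq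
    using E0 h'jE h0E subgroup.m_closed subgroup.m_inv_closed by metis
  obtain n :: nat where n: "n > 0" "f [^] n = \<one>" using finite_subgroup_torsion[OF F(1) F(2) jf(1)] by blast
  have tn: "t [^] (int n) = \<one>" unfolding t_def using conj_pow[of "inv k" f "int n"] kc fc n
    by (simp add: int_pow_int)
  interpret E: group "G\<lparr>carrier := Eplus G h0\<rparr>" using subgroup.subgroup_is_group[OF E0 is_group] .
  have phipow: "\<phi> (x [^] (i::int)) = i * \<phi> x" if "x \<in> Eplus G h0" for x i
  proof -
    have "\<phi> (x [^]\<^bsub>G\<lparr>carrier := Eplus G h0\<rparr>\<^esub> i) = \<phi> x [^]\<^bsub>integer_group\<^esub> i"
      using hom_int_pow[OF hom _ E.is_group group_integer_group] that by simp
    then show ?thesis using int_pow_consistent[OF E0 that] by simp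
  qed
  have "\<phi> t = 0"
  proof -
    have "int n * \<phi> t = \<phi> \<one>" using phipow[OF tE, of "int n"] tn by simp
    also have "\<phi> \<one> = 0" using hom_one[OF hom E.is_group group_integer_group] by simp
    finally show ?thesis using n by simp
  qed
  moreover have "\<phi> h0 = \<phi> (h' [^] j) + \<phi> t"
    using hom_mult[OF hom, of "h' [^] j" t] h'jE tE h0eq by simp
  ultimately have "1 = j * \<phi> h'" using phipow[OF h'E, of j] phi1 by simp
  then have ph: "\<phi> h' = 1 \<or> \<phi> h' = -1" using zmult_eq_1_iff[of j "\<phi> h'"] by auto
  obtain f0 where f0: "f0 \<in> F0" "h' = h0 [^] (\<phi> h') \<otimes> f0" using repr h'E by blast
  have "h' = h0 \<otimes> f0 \<or> h' = inv h0 \<otimes> f0"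
    using ph f0 h0 by (auto simp: int_pow_neg)
  then show ?thesis using kc f0 unfolding h'_def by blast
qed

end



theorem lemma4p10:
  fixes G :: "('a, 'b) monoid_scheme" and M :: nat and g :: 'a
  assumes "non_elementary_hyperbolic G"
    and "M = Max {card H | H. subgroup H G \<and> finite H}"
    and "infinite_order G g"
  shows "finite {conj_class G h | h. primitive G h \<and> commensurated G g h}
       \<and> card {conj_class G h | h. primitive G h \<and> commensurated G g h} \<le> 2 * M"
proof -
  have hg: "hyperbolic_group G" using assms(1) unfolding non_elementary_hyperbolic_def by simp
  then have grp: "group G" unfolding hyperbolic_group_def by simp
  from hg obtain S \<delta> where fgS: "finite_gen_set G S" and hyp:
    "\<forall>x\<in>carrier G. \<forall>y\<in>carrier G. \<forall>z\<in>carrier G. \<forall>w\<in>carrier G.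
        gromov_prod G S w x z \<ge> min (gromov_prod G S w x y) (gromov_prod G S w y z) - \<delta>"
    unfolding hyperbolic_group_def by blast
  interpret fg_group G S using grp fgS by (simp add: fg_group_def fg_group_axioms_def)
  define B where "B = card {z \<in> carrier G. word_length G S z \<le> nat \<lfloor>4*\<delta>+1\<rfloor>}"
  have bnd: "card H \<le> B" if "subgroup H G" "finite H" for H
    unfolding B_def using finite_subgroup_bound[OF hyp that] .
  have finC: "finite {card H | H. subgroup H G \<and> finite H}"
    by (rule finite_subset[of _ "{..B}"]) (use bnd in auto)
  have cardM: "card H \<le> M" if "subgroup H G" "finite H" for H
    unfolding assms(2) by (rule Max_ge[OF finC]) (use that in blast)
  define Cls where "Cls = {conj_class G h | h. primitive G h \<and> commensurated G g h}"
  have "finite Cls \<and> card Cls \<le> 2 * M"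
  proof (cases "Cls = {}")
    case True then show ?thesis by simp
  next
    case False
    then obtain h0 where h0: "primitive G h0" "commensurated G g h0" unfolding Cls_def by blast
    have io0: "infinite_order G h0" using h0(1) unfolding primitive_def by simp
    have h0c: "h0 \<in> carrier G" using io0 unfolding infinite_order_def by simp
    obtain F0 \<phi> where F0: "subgroup F0 G" "finite F0"
      and hom: "\<phi> \<in> hom (G\<lparr>carrier := Eplus G h0\<rparr>) integer_group" and phi1: "\<phi> h0 = 1"
      and repr: "\<forall>x\<in>Eplus G h0. \<exists>f\<in>F0. x = h0 [^]\<^bsub>G\<^esub> (\<phi> x) \<otimes>\<^bsub>G\<^esub> f"
      using prim_struct[OF h0(1)] by blast
    define Cand where "Cand = (\<lambda>f. h0 \<otimes>\<^bsub>G\<^esub> f) ` F0 \<union> (\<lambda>f. inv\<^bsub>G\<^esub> h0 \<otimes>\<^bsub>G\<^esub> f) ` F0"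
    have sub: "Cls \<subseteq> conj_class G ` Cand"
    proof
      fix x assume "x \<in> Cls"
      then obtain h where h: "x = conj_class G h" "primitive G h" "commensurated G g h"
        unfolding Cls_def by blast
      have hc: "h \<in> carrier G" using h(3) unfolding commensurated_def by simp
      obtain k f where kf: "k \<in> carrier G" "f \<in> F0"
        "k \<otimes>\<^bsub>G\<^esub> h \<otimes>\<^bsub>G\<^esub> inv\<^bsub>G\<^esub> k = h0 \<otimes>\<^bsub>G\<^esub> f \<or> k \<otimes>\<^bsub>G\<^esub> h \<otimes>\<^bsub>G\<^esub> inv\<^bsub>G\<^esub> k = inv\<^bsub>G\<^esub> h0 \<otimes>\<^bsub>G\<^esub> f"
        using claim[OF h0(2) io0 h(2) h(3) F0(1) hom phi1 repr] by blast
      have "x = conj_class G (k \<otimes>\<^bsub>G\<^esub> h \<otimes>\<^bsub>G\<^esub> inv\<^bsub>G\<^esub> k)" using conj_class_conj[OF kf(1) hc] h(1) by simp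
      moreover have "k \<otimes>\<^bsub>G\<^esub> h \<otimes>\<^bsub>G\<^esub> inv\<^bsub>G\<^esub> k \<in> Cand" using kf unfolding Cand_def by blast
      ultimately show "x \<in> conj_class G ` Cand" by blast
    qed
    have finCand: "finite Cand" unfolding Cand_def using F0(2) by simp
    have "card Cand \<le> card F0 + card F0"
      unfolding Cand_def using card_Un_le card_image_le[OF F0(2)] by (meson add_mono order_trans)
    then have "card Cand \<le> 2 * M" using cardM[OF F0] by simp
    moreover have "card Cls \<le> card Cand"
      using card_mono[OF finite_imageI[OF finCand] sub] card_image_le[OF finCand, of "conj_class G"] by linarith
    ultimately show ?thesis using finite_subset[OF sub finite_imageI[OF finCand]] by simp
  qed
  then show ?thesis unfolding Cls_def .
qed


end
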